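(* Let $d\in\mathbb{N}$, $k\in\{1,\dots,d\}$, $\varepsilon>0$, and $\mathbf{e}_1,\mathbf{e}_2\in\mathbb{R}^d$. Define $$\psi_{feat}(\mathbf{e}_2):=\begin{cases}\max_{i\notin \mathrm{TopFeatures}(\mathbf{e}_1;k)}|e_{2i}| & (k<d),\\ -\varepsilon & (k=d),\end{cases}$$ and $$\ell_{\mathrm{Ftr}}(\mathbf{e}_2;\mathbf{e}_1,k):=\frac{1}{k}\sum_{i\in \mathrm{TopFeatures}(\mathbf{e}_1;k)}\max\big(0,\ \psi_{feat}(\mathbf{e}_2)-|e_{2i}|+\varepsilon\big).$$ Then $$1-\mathrm{FeatAgree}(\mathbf{e}_1,\mathbf{e}_2;k)\le \varepsilon^{-1}\,\ell_{\mathrm{Ftr}}(\mathbf{e}_2;\mathbf{e}_1,k).$$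
   Context: For $\mathbf{x}\in\mathbb{R}^d$, $\mathrm{rank}(\mathbf{x},i)$ denotes the position of index $i$ when the indices $1,\dots,d$ are ordered by descending $|x_i|$, i.e. $\mathrm{rank}(\mathbf{x},i)=|\{j\in[d]:|x_j|\ge|x_i|\}|$, with ties broken so that ranks form a permutation of $[d]$ (paper's convention: if $|x_i|=|x_j|$ with $i>j$ then $\mathrm{rank}(\mathbf{x},j)=\mathrm{rank}(\mathbf{x},i)+1$). $\mathrm{TopFeatures}(\mathbf{x};k):=\{i\in[d]:\mathrm{rank}(\mathbf{x},i)\le k\}$. The top-$k$ feature agreement is $\mathrm{FeatAgree}(\mathbf{e}_1,\mathbf{e}_2;k):=\frac1k\big|\{i\in[d]: i\in\mathrm{TopFeatures}(\mathbf{e}_1;k)\wedge i\in\mathrm{TopFeatures}(\mathbf{e}_2;k)\}\big|$. *)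

theory Defs
  imports "HOL-Analysis.Analysis"
begin

text \<open>Vectors in R^d are functions nat => real, only the coordinates 1..d matter.
  rank x i = number of j in {1..d} with |x j| > |x i|, or |x j| = |x i| and j >= i
  (the paper's tie-break: among equal magnitudes, the larger index gets the smaller rank).\<close>

definition rank :: "nat \<Rightarrow> (nat \<Rightarrow> real) \<Rightarrow> nat \<Rightarrow> nat" where
  "rank d x i = card {j \<in> {1..d}. \<bar>x j\<bar> > \<bar>x i\<bar> \<or> (\<bar>x j\<bar> = \<bar>x i\<bar> \<and> j \<ge> i)}"

definition TopFeatures :: "nat \<Rightarrow> (nat \<Rightarrow> real) \<Rightarrow> nat \<Rightarrow> nat set" where
  "TopFeatures d x k = {i \<in> {1..d}. rank d x i \<le> k}"

definition FeatAgree :: "nat \<Rightarrow> (nat \<Rightarrow> real) \<Rightarrow> (nat \<Rightarrow> real) \<Rightarrow> nat \<Rightarrow> real" where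
  "FeatAgree d e1 e2 k = card (TopFeatures d e1 k \<inter> TopFeatures d e2 k) / real k"

definition psi_feat :: "nat \<Rightarrow> (nat \<Rightarrow> real) \<Rightarrow> nat \<Rightarrow> real \<Rightarrow> (nat \<Rightarrow> real) \<Rightarrow> real" where
  "psi_feat d e1 k \<epsilon> e2 =
     (if k < d then Max ((\<lambda>i. \<bar>e2 i\<bar>) ` ({1..d} - TopFeatures d e1 k)) else - \<epsilon>)"

definition loss_Ftr :: "nat \<Rightarrow> real \<Rightarrow> (nat \<Rightarrow> real) \<Rightarrow> (nat \<Rightarrow> real) \<Rightarrow> nat \<Rightarrow> real" where
  "loss_Ftr d \<epsilon> e2 e1 k =
     (1 / real k) * (\<Sum>i\<in>TopFeatures d e1 k. max 0 (psi_feat d e1 k \<epsilon> e2 - \<bar>e2 i\<bar> + \<epsilon>))"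

end

theory Submission
  imports Defs
begin

lemma rank_lt:
  assumes "i \<in> {1..d}" "j \<in> {1..d}" "\<bar>x j\<bar> > \<bar>x i\<bar> \<or> (\<bar>x j\<bar> = \<bar>x i\<bar> \<and> j > i)"
  shows "rank d x j < rank d x i"
proof -
  let ?S = "\<lambda>i. {l \<in> {1..d}. \<bar>x l\<bar> > \<bar>x i\<bar> \<or> (\<bar>x l\<bar> = \<bar>x i\<bar> \<and> l \<ge> i)}"
  have "?S j \<subseteq> ?S i" using assms by auto
  moreover have "i \<in> ?S i" "i \<notin> ?S j" using assms by auto
  ultimately have "?S j \<subset> ?S i" by blast
  then have "card (?S j) < card (?S i)" by (intro psubset_card_mono) auto
  then show ?thesis unfolding rank_def .
qed

lemma rank_mono:
  assumes "i \<in> {1..d}" "j \<in> {1..d}" "\<bar>x j\<bar> < \<bar>x i\<bar>"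
  shows "rank d x i < rank d x j"
  using rank_lt[of j d i x] assms by auto

lemma rank_inj: "inj_on (rank d x) {1..d}"
proof (rule inj_onI)
  fix i j assume h: "i \<in> {1..d}" "j \<in> {1..d}" "rank d x i = rank d x j"
  show "i = j"
  proof (rule ccontr)
    assume "i \<noteq> j"
    then have "(\<bar>x j\<bar> > \<bar>x i\<bar> \<or> (\<bar>x j\<bar> = \<bar>x i\<bar> \<and> j > i)) \<or>
               (\<bar>x i\<bar> > \<bar>x j\<bar> \<or> (\<bar>x i\<bar> = \<bar>x j\<bar> \<and> i > j))" by linarith
    then show False using rank_lt[of i d j x] rank_lt[of j d i x] h by auto
  qed
qed

lemma rank_range: assumes "i \<in> {1..d}" shows "rank d x i \<in> {1..d}"
proof -
  define S where "S = {l \<in> {1..d}. \<bar>x l\<bar> > \<bar>x i\<bar> \<or> (\<bar>x l\<bar> = \<bar>x i\<bar> \<and> l \<ge> i)}"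
  have iS: "i \<in> S" using assms unfolding S_def by simp
  have sub: "S \<subseteq> {1..d}" unfolding S_def by blast
  have fin: "finite S" using sub finite_subset by blast
  have "card S \<noteq> 0" using iS fin by auto
  moreover have "card S \<le> d" using card_mono[OF _ sub] by simp
  ultimately show ?thesis unfolding rank_def S_def[symmetric] by simp
qed

lemma rank_image: "rank d x ` {1..d} = {1..d}"
  using rank_inj rank_range by (intro endo_inj_surj) auto

lemma card_top: assumes "k \<le> d" shows "card (TopFeatures d x k) = k"
proof -
  have "rank d x ` TopFeatures d x k = {1..k}"
  proof
    show "rank d x ` TopFeatures d x k \<subseteq> {1..k}"
      unfolding TopFeatures_def using rank_range by fastforce
    show "{1..k} \<subseteq> rank d x ` TopFeatures d x k"
    proof
      fix y assume "y \<in> {1..k}"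
      then have "y \<in> rank d x ` {1..d}" using rank_image assms by auto
      then obtain i where "i \<in> {1..d}" "y = rank d x i" by auto
      then show "y \<in> rank d x ` TopFeatures d x k" unfolding TopFeatures_def
        using \<open>y \<in> {1..k}\<close> by auto
    qed
  qed
  moreover have "inj_on (rank d x) (TopFeatures d x k)"
    using rank_inj by (rule inj_on_subset) (auto simp: TopFeatures_def)
  ultimately show ?thesis by (metis card_atLeastAtMost card_image diff_Suc_1)
qed

theorem lemma1:
  fixes d k :: nat and \<epsilon> :: real and e1 e2 :: "nat \<Rightarrow> real"
  assumes "1 \<le> k" and "k \<le> d" and "\<epsilon> > 0"
  shows "1 - FeatAgree d e1 e2 k \<le> (1 / \<epsilon>) * loss_Ftr d \<epsilon> e2 e1 k"
proof -
  define T1 where "T1 = TopFeatures d e1 k"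
  define T2 where "T2 = TopFeatures d e2 k"
  define f where "f = (\<lambda>i. max 0 (psi_feat d e1 k \<epsilon> e2 - \<bar>e2 i\<bar> + \<epsilon>))"
  have fin1: "finite T1" "finite T2" unfolding T1_def T2_def TopFeatures_def by auto
  have c1: "card T1 = k" and c2: "card T2 = k" unfolding T1_def T2_def using card_top assms by auto
  have sub1: "T1 \<subseteq> {1..d}" "T2 \<subseteq> {1..d}" unfolding T1_def T2_def TopFeatures_def by auto
  have key: "f i \<ge> \<epsilon>" if i: "i \<in> T1 - T2" for i
  proof -
    have "\<not> T2 \<subseteq> T1 - {i}"
    proof
      assume "T2 \<subseteq> T1 - {i}"
      then have "card T2 \<le> card (T1 - {i})" using fin1 by (intro card_mono) auto
      also have "\<dots> = k - 1" using c1 i by auto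
      finally show False using c2 assms by auto
    qed
    then obtain j where j: "j \<in> T2" "j \<notin> T1" using i by auto
    have "k < d"
    proof (rule ccontr)
      assume "\<not> k < d" then have "k = d" using assms by auto
      then have "T1 = {1..d}" using c1 sub1 by (intro card_subset_eq) auto
      then show False using j sub1 by auto
    qed
    have ge: "\<bar>e2 j\<bar> \<ge> \<bar>e2 i\<bar>"
    proof (rule ccontr)
      assume "\<not> ?thesis"
      moreover have "i \<in> {1..d}" "j \<in> {1..d}" using i j sub1 by auto
      ultimately have "rank d e2 i < rank d e2 j" using rank_mono[of i d j e2] by simp
      moreover have "rank d e2 j \<le> k" using j unfolding T2_def TopFeatures_def by auto
      moreover have "\<not> rank d e2 i \<le> k" using i sub1 unfolding T2_def TopFeatures_def by auto
      ultimately show False by auto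
    qed
    have "j \<in> {1..d} - T1" using j sub1 by auto
    then have "\<bar>e2 j\<bar> \<le> psi_feat d e1 k \<epsilon> e2" unfolding psi_feat_def using \<open>k < d\<close>
      by (auto simp: T1_def intro!: Max_ge)
    then show ?thesis unfolding f_def using ge by auto
  qed
  have "(\<Sum>i\<in>T1. f i) \<ge> (\<Sum>i\<in>T1 - T2. f i)"
    using fin1 by (intro sum_mono2) (auto simp: f_def)
  moreover have "(\<Sum>i\<in>T1 - T2. f i) \<ge> (\<Sum>i\<in>T1 - T2. \<epsilon>)"
    using key by (intro sum_mono) auto
  moreover have "card (T1 - T2) = k - card (T1 \<inter> T2)"
    using fin1 c1 by (simp add: card_Diff_subset_Int)
  moreover have "card (T1 \<inter> T2) \<le> k" using c1 fin1 card_mono[of T1 "T1 \<inter> T2"] by auto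
  ultimately have S: "(\<Sum>i\<in>T1. f i) \<ge> \<epsilon> * (real k - card (T1 \<inter> T2))"
    by (simp add: of_nat_diff mult.commute)
  have kpos: "real k > 0" using assms by auto
  have "1 - FeatAgree d e1 e2 k = (real k - card (T1 \<inter> T2)) / real k"
    unfolding FeatAgree_def T1_def T2_def using kpos by (simp add: field_simps)
  also have "\<dots> \<le> ((1/\<epsilon>) * (\<Sum>i\<in>T1. f i)) / real k"
    using S assms(3) kpos by (intro divide_right_mono) (auto simp: field_simps)
  also have "\<dots> = (1 / \<epsilon>) * loss_Ftr d \<epsilon> e2 e1 k"
    unfolding loss_Ftr_def T1_def f_def by simp
  finally show ?thesis .
qed

end
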